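(* Let $m,n\ge2$ with $1/m+1/n<1$, $0<|\lambda|<1/(2^mn^2)$, and $P_\lambda(z)=\dfrac{\frac1n((1+z)^n-1)+\lambda^{m+n}z^{m+n}}{1-\lambda^{m+n}z^{m+n}}$. Put $r_0=(n/m)^{1/(m+n)}$ and $\widetilde w_j=\frac{r_0}{\lambda}\exp\!\big(\pi\mathrm{i}\tfrac{2j-1}{m+n}\big)$ for $1\le j\le m+n$. Then for each $j$ there is a critical point $w_j$ of $P_\lambda$ (a zero of $E_\lambda(z)=(1+z)^{n-1}+\lambda^{m+n}z^{m+n-1}\{(1+\frac mn)[(1+z)^n+n-1]-z(1+z)^{n-1}\}$) with $|w_j-\widetilde w_j|<2(m+n)/m$, and $w_i=w_j$ if and only if $i=j$. *)

theory Defs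
  imports Complex_Main
begin

definition P_lam :: "nat \<Rightarrow> nat \<Rightarrow> complex \<Rightarrow> complex \<Rightarrow> complex" where
  "P_lam m n lam z =
     ((1 / of_nat n) * ((1 + z) ^ n - 1) + lam ^ (m + n) * z ^ (m + n))
     / (1 - lam ^ (m + n) * z ^ (m + n))"

text \<open>E_lambda: its zeros are the (free) critical points of P_lambda.\<close>
definition E_lam :: "nat \<Rightarrow> nat \<Rightarrow> complex \<Rightarrow> complex \<Rightarrow> complex" where
  "E_lam m n lam z =
     (1 + z) ^ (n - 1) + lam ^ (m + n) * z ^ (m + n - 1) *
       ((1 + of_nat m / of_nat n) * ((1 + z) ^ n + of_nat n - 1) - z * (1 + z) ^ (n - 1))"

definition r0 :: "nat \<Rightarrow> nat \<Rightarrow> real" where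
  "r0 m n = (real n / real m) powr (1 / real (m + n))"

definition w_tilde :: "nat \<Rightarrow> nat \<Rightarrow> complex \<Rightarrow> nat \<Rightarrow> complex" where
  "w_tilde m n lam j =
     complex_of_real (r0 m n) / lam
       * exp (complex_of_real pi * \<i> * of_nat (2 * j - 1) / of_nat (m + n))"

end

theory Submission imports Defs "HOL-Analysis.Analysis" begin

lemma h_bound:
  fixes t :: complex
  shows "cmod ((1+t)^k - 1 - of_nat k * t) \<le> real k^2/2 * cmod t^2 * (1 + cmod t)^k"
proof (induction k)
  case 0 then show ?case by simp
next
  case (Suc k)
  have eq: "(1+t)^(Suc k) - 1 - of_nat (Suc k) * t = (1+t)*((1+t)^k - 1 - of_nat k * t) + of_nat k * t^2"
    by (simp add: algebra_simps power2_eq_square)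
  have x0: "0 \<le> cmod t" by simp
  have p1: "1 \<le> (1 + cmod t)^Suc k" by (rule one_le_power) simp
  have "cmod ((1+t)^(Suc k) - 1 - of_nat (Suc k) * t) \<le> cmod (1+t) * cmod ((1+t)^k - 1 - of_nat k * t) + real k * cmod t^2"
    unfolding eq by (rule order_trans[OF norm_triangle_ineq]) (simp add: norm_mult norm_power)
  also have "\<dots> \<le> (1 + cmod t) * (real k^2/2 * cmod t^2 * (1 + cmod t)^k) + real k * cmod t^2 * (1 + cmod t)^Suc k"
  proof (rule add_mono)
    show "cmod (1+t) * cmod ((1+t)^k - 1 - of_nat k * t) \<le> (1 + cmod t) * (real k^2/2 * cmod t^2 * (1 + cmod t)^k)"
      by (rule mult_mono[OF _ Suc.IH]) (auto intro: norm_triangle_le)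
    show "real k * cmod t^2 \<le> real k * cmod t^2 * (1 + cmod t)^Suc k"
      using mult_left_mono[OF p1, of "real k * cmod t^2"] by simp
  qed
  also have "\<dots> = (real k^2/2 + real k) * cmod t^2 * (1 + cmod t)^Suc k"
    by (simp add: algebra_simps)
  also have "\<dots> \<le> real (Suc k)^2/2 * cmod t^2 * (1 + cmod t)^Suc k"
    by (intro mult_right_mono) (auto simp: power2_eq_square algebra_simps)
  finally show ?case .
qed

lemma P_bound:
  fixes s :: real assumes "0 \<le> s" "s \<le> 1"
  shows "(1+s)^N * (1 - real N * s) \<le> 1"
proof -
  have "1 - real N * s \<le> (1 - s)^N"
    using Bernoulli_inequality[of "-s" N] assms by simp
  hence "(1+s)^N * (1 - real N * s) \<le> (1+s)^N * (1-s)^N"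
    by (intro mult_left_mono) (use assms in auto)
  also have "\<dots> = (1 - s^2)^N" by (simp add: power_mult_distrib[symmetric] algebra_simps power2_eq_square)
  also have "\<dots> \<le> 1" using assms by (intro power_le_one) (auto simp: power2_eq_square mult_le_one)
  finally show ?thesis .
qed

lemma sin_lower:
  fixes v :: real assumes "0 \<le> v" "v \<le> 2"
  shows "v / 3 \<le> sin v"
proof -
  have "\<bar>sin v - (\<Sum>m<3. sin_coeff m * v ^ m)\<bar> \<le> inverse (fact 3) * \<bar>v\<bar> ^ 3"
    by (rule Maclaurin_sin_bound)
  moreover have "(\<Sum>m<3. sin_coeff m * v ^ m) = v"
    by (simp add: numeral_3_eq_3 sin_coeff_def)
  ultimately have "v - v^3/6 \<le> sin v" using assms by (simp add: fact_numeral abs_if split: if_splits)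
  moreover have "v^3/6 \<le> v * 2/3"
  proof -
    have "v^3 = v * v^2" by (simp add: power3_eq_cube power2_eq_square)
    also have "\<dots> \<le> v * 4" using assms by (intro mult_left_mono) (auto simp: power2_eq_square intro: mult_mono[of v 2 v 2, simplified])
    finally show ?thesis by simp
  qed
  ultimately show ?thesis by simp
qed

lemma key_identity:
  fixes lam a t :: complex and m n n1 :: nat
  assumes n: "n = Suc n1" and m: "m > 0"
    and c: "lam^(m+n) * a^(m+n) = - (of_nat n / of_nat m)"
  shows "of_nat m * (a*(1+t)) * E_lam m n lam (a*(1+t)) =
     of_nat m * (a*(1+t)) * (1 + a*(1+t))^n1 - (1+t)^(m+n) *
       (of_nat m * (a*(1+t)) * (1 + a*(1+t))^n1 + of_nat (m+n) * ((1 + a*(1+t))^n1 + of_nat n1))"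
proof -
  define z where "z = a*(1+t)"
  define B where "B = (1 + of_nat m / of_nat n) * ((1 + z) ^ n + of_nat n - 1) - z * (1 + z) ^ n1"
  have L: "lam^(m+n) * z^(m+n) = - (of_nat n / of_nat m) * (1+t)^(m+n)"
    using c unfolding z_def by (simp add: power_mult_distrib mult.assoc[symmetric])
  have E: "E_lam m n lam z = (1+z)^n1 + lam^(m+n) * z^(m+n1) * B"
    unfolding E_lam_def B_def using n by simp
  have zz: "z^(m+n1) * z = z^(m+n)" using n by simp
  have "of_nat m * z * E_lam m n lam z = of_nat m * z * (1+z)^n1 + of_nat m * (lam^(m+n) * (z^(m+n1) * z)) * B"
    unfolding E by (simp add: algebra_simps)
  also have "\<dots> = of_nat m * z * (1+z)^n1 - of_nat n * (1+t)^(m+n) * B"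
    unfolding zz L using m by simp
  also have "of_nat n * B = of_nat m * z * (1+z)^n1 + of_nat (m+n) * ((1+z)^n1 + of_nat n1)"
  proof -
    have nz: "(1 + of_nat n1 :: complex) \<noteq> 0"
      by (metis of_nat_Suc of_nat_neq_0 add.commute)
    show ?thesis unfolding B_def using n nz by (simp add: field_simps)
  qed
  hence "of_nat m * z * (1+z)^n1 - of_nat n * (1+t)^(m+n) * B = of_nat m * z * (1+z)^n1 - (1+t)^(m+n) *
       (of_nat m * z * (1+z)^n1 + of_nat (m+n) * ((1+z)^n1 + of_nat n1))"
    by (metis mult.assoc mult.commute)
  finally show ?thesis unfolding z_def .
qed

lemma core_ineq:
  fixes y s P :: real
  assumes "0 < y" "y \<le> 5/18" "0 \<le> s" "s \<le> 1/18" "0 \<le> P" "P * (1 - y) \<le> 1"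
  shows "P * (12/25 * y / (1 - s) + y^2/2) \<le> y"
proof -
  have P: "P \<le> 18/13"
  proof -
    have "P * (13/18) \<le> P * (1 - y)" using assms by (intro mult_left_mono) auto
    thus ?thesis using assms by simp
  qed
  have a: "12/25 / (1 - s) \<le> 216/425" using assms by (simp add: field_simps)
  have b: "12/25 / (1 - s) + y/2 \<le> 216/425 + 5/36" using a assms by simp
  have "P * (12/25 / (1 - s) + y/2) \<le> 18/13 * (216/425 + 5/36)"
    using P b assms by (intro mult_mono) auto
  also have "\<dots> \<le> 1" by simp
  finally have c: "P * (12/25 / (1 - s) + y/2) \<le> 1" .
  have "P * (12/25 * y / (1 - s) + y^2/2) = y * (P * (12/25 / (1 - s) + y/2))"
    by (simp add: algebra_simps power2_eq_square)
  also have "\<dots> \<le> y * 1" using c assms by (intro mult_left_mono) auto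
  finally show ?thesis by simp
qed

lemma root_near:
  fixes lam a :: complex and m n :: nat and A :: real
  assumes m2: "m \<ge> 2" and n2: "n \<ge> 2" and N5: "m + n \<ge> 5"
    and aA: "cmod a = A" and mA: "real m * A \<ge> 9 * real (m+n)" and An: "A \<ge> 2 * real n ^ 2"
    and c: "lam^(m+n) * a^(m+n) = - (of_nat n / of_nat m)"
  shows "\<exists>w. E_lam m n lam w = 0 \<and> cmod (w - a) \<le> 5 / (2 * real m)"
proof -
  obtain n1 where n: "n = Suc n1" using n2 by (cases n) auto
  have n1: "n1 \<ge> 1" using n n2 by simp
  define N where "N = m + n"
  have N5': "real N \<ge> 5" using N5 unfolding N_def by linarith
  have mpos: "real m > 0" using m2 by simp
  have A8: "A \<ge> 8" using An n2
  proof -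
    have "real n ^ 2 \<ge> 4" using n2 by (metis of_nat_numeral numeral_le_real_of_nat_iff power2_nat_le_eq_le power_mono of_nat_0_le_iff num_double numeral_times_numeral power2_eq_square of_nat_power real_of_nat_ge_one_iff)
    thus ?thesis using An by simp
  qed
  define s where "s = 5 / (2 * real m * A)"
  define y where "y = real N * s"
  have spos: "s > 0" unfolding s_def using mpos A8 by simp
  have As: "A * s = 5 / (2 * real m)" unfolding s_def using A8 by simp
  have As2: "A * s \<le> 5/4" unfolding As using m2 by (simp add: field_simps)
  have y1: "y \<le> 5/18"
  proof -
    have "y = 5 * real N / (2 * (real m * A))" unfolding y_def s_def by simp
    also have "\<dots> \<le> 5 * real N / (2 * (9 * real N))"
      using mA N5' unfolding N_def by (intro divide_left_mono mult_left_mono) auto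
    also have "\<dots> = 5/18" using N5' by simp
    finally show ?thesis .
  qed
  have ypos: "y > 0" unfolding y_def using spos N5' by simp
  have sy: "s \<le> y / 5" unfolding y_def using spos N5' by (simp add: field_simps)
  have s18: "s \<le> 1/18" using sy y1 by simp
  define R where "R = (\<lambda>z::complex. of_nat N * ((1+z)^n1 + of_nat n1))"
  define K where "K = (\<lambda>z::complex. of_nat m * z * (1+z)^n1)"
  define F where "F = (\<lambda>t::complex. - ((1+t)^N * (R (a*(1+t)) / K (a*(1+t))) + ((1+t)^N - 1 - of_nat N * t)) / of_nat N)"
  have bnds: "cmod (a*(1+t)) \<ge> A * (1 - s) \<and> K (a*(1+t)) \<noteq> 0 \<and>
      cmod (R (a*(1+t)) / K (a*(1+t))) \<le> 6/5 * real N / (real m * A * (1 - s))"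
    if t: "cmod t \<le> s" for t
  proof -
    define z where "z = a*(1+t)"
    have t1: "cmod (1+t) \<ge> 1 - s"
      using t norm_triangle_ineq2[of 1 "-t"] by simp
    have z1: "cmod z \<ge> A * (1 - s)"
      unfolding z_def norm_mult aA using t1 A8 by (intro mult_left_mono) auto
    have zpos: "A * (1 - s) > 0" using A8 s18 by simp
    have zz: "cmod (1+z) \<ge> cmod z - 1"
      using norm_triangle_ineq2[of z "-1"] by (simp add: add.commute)
    have A2: "A - 9/4 \<ge> 5 * real n1"
    proof -
      have "2 * real n ^ 2 - 9/4 \<ge> 5 * real n1"
      proof -
        have r: "real n1 \<ge> 1" using n1 by simp
        hence "real n1 * real n1 \<ge> real n1" using mult_left_mono[of 1 "real n1" "real n1"] by simp
        moreover have "2 * real (Suc n1) ^ 2 - 9/4 = 2*(real n1*real n1) + 4*real n1 - 1/4"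
          by (simp add: power2_eq_square algebra_simps)
        ultimately show ?thesis using r unfolding n by linarith
      qed
      thus ?thesis using An by simp
    qed
    have z1': "cmod (1+z) \<ge> 5 * real n1" using zz z1 As2 A2 by (simp add: algebra_simps)
    have z1'': "cmod (1+z) \<ge> 1" using z1' n1 by simp
    define q where "q = cmod (1+z) ^ n1"
    have q1: "q \<ge> cmod (1+z)" unfolding q_def using power_increasing[OF n1 z1''] by simp
    have qpos: "q > 0" using q1 z1'' by simp
    have Rb: "cmod (R z) \<le> 6/5 * real N * q"
    proof -
      have "cmod (R z) \<le> real N * (q + real n1)"
      proof -
        have "cmod ((1 + z) ^ n1 + complex_of_nat n1) \<le> cmod (1+z)^n1 + real n1"
          using norm_triangle_ineq[of "(1 + z) ^ n1" "complex_of_nat n1"] by (simp add: norm_power)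
        thus ?thesis unfolding R_def q_def norm_mult norm_of_nat by (simp add: mult_left_mono)
      qed
      also have "\<dots> \<le> real N * (6/5 * q)"
        using q1 z1' by (intro mult_left_mono) auto
      finally show ?thesis by simp
    qed
    have Kn: "cmod (K z) = real m * cmod z * q" unfolding K_def q_def by (simp add: norm_mult norm_power)
    have Kne: "K z \<noteq> 0" using Kn mpos qpos z1 zpos by auto
    have "cmod (R z / K z) = cmod (R z) / (real m * cmod z * q)" by (simp add: Kn norm_divide)
    also have "\<dots> \<le> 6/5 * real N * q / (real m * cmod z * q)"
      using Rb mpos qpos z1 zpos by (intro divide_right_mono) auto
    also have "\<dots> = 6/5 * real N / (real m * cmod z)" using qpos by simp
    also have "\<dots> \<le> 6/5 * real N / (real m * (A * (1 - s)))"
    proof (rule divide_left_mono)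
      show "real m * (A * (1 - s)) \<le> real m * cmod z" using z1 mpos by simp
      show "0 \<le> 6 / 5 * real N" by simp
      show "0 < real m * cmod z * (real m * (A * (1 - s)))"
      proof -
        have "0 < cmod z" using z1 zpos by linarith
        thus ?thesis using mpos zpos by simp
      qed
    qed
    finally show ?thesis using z1 Kne unfolding z_def by (simp add: mult.assoc)
  qed
  have cont: "continuous_on (cball 0 s) F"
    unfolding F_def R_def K_def
    apply (intro continuous_intros)
    using bnds N5' unfolding K_def by auto
  have maps: "F \<in> cball 0 s \<rightarrow> cball 0 s"
  proof
    fix t :: complex assume "t \<in> cball 0 s"
    hence t: "cmod t \<le> s" by simp
    define P where "P = (1+s)^N"
    have P0: "P \<ge> 0" unfolding P_def using spos by simp
    have PB: "P * (1 - y) \<le> 1" unfolding P_def y_def using P_bound[of s N] spos s18 by simp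
    have p1: "cmod ((1+t)^N) \<le> P"
      unfolding P_def norm_power using t by (intro power_mono order_trans[OF norm_triangle_ineq]) auto
    have hb: "cmod ((1+t)^N - 1 - of_nat N * t) \<le> real N^2/2 * s^2 * P"
    proof -
      have "cmod ((1+t)^N - 1 - of_nat N * t) \<le> real N^2/2 * cmod t^2 * (1 + cmod t)^N" by (rule h_bound)
      also have "\<dots> \<le> real N^2/2 * s^2 * P"
        unfolding P_def using t by (intro mult_mono power_mono) auto
      finally show ?thesis .
    qed
    define X where "X = 6/5 * real N / (real m * A * (1 - s))"
    have X0: "X \<ge> 0" unfolding X_def using mpos A8 s18 by simp
    have mA0: "real m * A > 0" using mpos A8 by simp
    have mA1: "real m * A \<ge> 8" using m2 A8 mult_mono[of 1 "real m" 8 A] by simp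
    have s': "s = (5/2) / (real m * A)" unfolding s_def by simp
    have e1: "1 - s = (real m * A - 5/2) / (real m * A)" unfolding s' using mA0 mpos A8 by (simp add: diff_divide_distrib)
    have Xy: "X = 12/25 * y / (1 - s)"
      unfolding X_def y_def e1 mult.assoc[of "real m" A] unfolding s_def using mA0 mA1
      by (simp add: field_simps)
    have "cmod (F t) = cmod ((1+t)^N * (R (a*(1+t)) / K (a*(1+t))) + ((1+t)^N - 1 - of_nat N * t)) / real N"
      unfolding F_def norm_divide norm_minus_cancel norm_of_nat ..
    also have "\<dots> \<le> (P * X + real N^2/2 * s^2 * P) / real N"
    proof -
      have "cmod ((1+t)^N * (R (a*(1+t)) / K (a*(1+t)))) \<le> P * X"
        unfolding norm_mult using bnds[OF t] p1 X0 P0 unfolding X_def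
        by (intro mult_mono) auto
      thus ?thesis using hb
        by (intro divide_right_mono order_trans[OF norm_triangle_ineq] add_mono) auto
    qed
    also have "P * X + real N^2/2 * s^2 * P = P * (12/25 * y / (1 - s) + y^2/2)"
      unfolding Xy y_def by (simp add: algebra_simps power2_eq_square)
    also have "P * (12/25 * y / (1 - s) + y^2/2) \<le> y" using core_ineq[OF ypos y1 _ s18 P0 PB] spos by simp
    hence "P * (12/25 * y / (1 - s) + y^2/2) / real N \<le> y / real N" using N5' by (simp add: divide_right_mono)
    finally have "cmod (F t) \<le> y / real N" using N5' by (simp add: divide_right_mono)
    thus "F t \<in> cball 0 s" unfolding y_def using N5' by simp
  qed
  obtain t where t: "t \<in> cball 0 s" and fx: "F t = t"
    using brouwer_ball[OF spos cont maps] by blast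
  have tb: "cmod t \<le> s" using t by simp
  define z where "z = a*(1+t)"
  have Kne: "K z \<noteq> 0" and zne: "z \<noteq> 0" using bnds[OF tb] A8 s18 unfolding z_def K_def by auto
  have Nne: "(of_nat N :: complex) \<noteq> 0" using N5' by auto
  define P' where "P' = (1+t)^N"
  have "- (P' * (R z / K z) + (P' - 1 - of_nat N * t)) / of_nat N = t"
    using fx unfolding F_def z_def P'_def .
  hence "- (P' * (R z / K z) + (P' - 1 - of_nat N * t)) = t * of_nat N"
    using Nne by (simp add: divide_eq_eq)
  hence h1: "P' * (R z / K z) + P' - 1 = 0" by (simp add: algebra_simps)
  have h2: "K z * (P' * (R z / K z)) = P' * R z" using Kne by simp
  have "K z * (P' * (R z / K z) + P' - 1) = 0" using h1 by simp
  hence h3: "P' * R z + P' * K z - K z = 0" unfolding ring_distribs h2 by (simp add: mult.commute)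
  have KI: "of_nat m * z * E_lam m n lam z = K z - P' * (K z + R z)"
    using key_identity[OF n _ c, of t] m2
    unfolding z_def R_def K_def N_def P'_def by simp
  have "of_nat m * z * E_lam m n lam z = 0"
    unfolding KI using h3 by (simp add: ring_distribs add.commute)
  hence E0: "E_lam m n lam z = 0" using zne m2 by simp
  have "cmod (z - a) = A * cmod t" unfolding z_def aA[symmetric] by (simp add: algebra_simps norm_mult)
  also have "\<dots> \<le> A * s" using tb A8 by (intro mult_left_mono) auto
  finally show ?thesis using E0 As by (intro exI[of _ z]) simp
qed


lemma sin_sep_half:
  fixes k N :: nat assumes "1 \<le> k" "2 * k \<le> N"
  shows "1 / real N \<le> sin (pi * real k / real N)"
proof -
  have N0: "real N > 0" using assms by simp
  define u where "u = pi * real k / real N"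
  have u0: "0 \<le> u" unfolding u_def by simp
  have "u \<le> pi / 2" unfolding u_def using assms N0 by (simp add: field_simps)
  hence u2: "u \<le> 2" using pi_less_4 by simp
  have "pi / real N \<le> u" unfolding u_def using assms N0 by (simp add: field_simps)
  hence "3 / real N \<le> u" using pi_gt3 N0 by (smt (verit) divide_right_mono)
  hence "1 / real N \<le> u / 3" by simp
  also have "\<dots> \<le> sin u" by (rule sin_lower[OF u0 u2])
  finally show ?thesis unfolding u_def .
qed

lemma sin_sep:
  fixes i j N :: nat assumes "1 \<le> i" "i \<le> N" "1 \<le> j" "j \<le> N" "i \<noteq> j"
  shows "1 / real N \<le> \<bar>sin (pi * (real i - real j) / real N)\<bar>"
proof -
  have gen: "1 / real N \<le> \<bar>sin (pi * real k / real N)\<bar>" if "1 \<le> k" "k < N" for k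
  proof (cases "2 * k \<le> N")
    case True thus ?thesis using sin_sep_half[OF that(1) True] by simp
  next
    case False
    have Np: "real N > 0" using that by simp
    have "pi * real k / real N = pi - pi * real (N - k) / real N"
      using that Np by (simp add: of_nat_diff diff_divide_distrib algebra_simps)
    hence "sin (pi * real k / real N) = sin (pi - pi * real (N - k) / real N)" by simp
    also have "\<dots> = sin (pi * real (N - k) / real N)" by simp
    finally have "sin (pi * real k / real N) = sin (pi * real (N - k) / real N)" .
    moreover have "1 / real N \<le> sin (pi * real (N - k) / real N)"
      using sin_sep_half[of "N - k" N] that False by simp
    ultimately show ?thesis by simp
  qed
  show ?thesis
  proof (cases "i > j")
    case True
    thus ?thesis using gen[of "i - j"] assms by (simp add: of_nat_diff)
  next
    case False
    hence "j > i" using assms by simp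
    moreover have "sin (pi * (real i - real j) / real N) = - sin (pi * real (j - i) / real N)"
    proof -
      have "pi * (real i - real j) / real N = - (pi * real (j - i) / real N)"
        using \<open>j > i\<close> by (simp add: of_nat_diff algebra_simps minus_divide_left)
      thus ?thesis by simp
    qed
    ultimately show ?thesis using gen[of "j - i"] assms by simp
  qed
qed

lemma omega_facts:
  fixes N j :: nat assumes "N > 0" "j \<ge> 1"
  shows "exp (complex_of_real pi * \<i> * of_nat (2 * j - 1) / of_nat N) = exp (\<i> * of_real (pi * (2 * real j - 1) / real N))"
    and "cmod (exp (complex_of_real pi * \<i> * of_nat (2 * j - 1) / of_nat N)) = 1"
    and "(exp (complex_of_real pi * \<i> * of_nat (2 * j - 1) / of_nat N)) ^ N = -1"
proof -
  show e: "exp (complex_of_real pi * \<i> * of_nat (2 * j - 1) / of_nat N) = exp (\<i> * of_real (pi * (2 * real j - 1) / real N))"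
    using assms by (simp add: of_nat_diff field_simps)
  thus "cmod (exp (complex_of_real pi * \<i> * of_nat (2 * j - 1) / of_nat N)) = 1" by simp
  have "(exp (complex_of_real pi * \<i> * of_nat (2 * j - 1) / of_nat N)) ^ N
      = exp (of_nat N * (complex_of_real pi * \<i> * of_nat (2 * j - 1) / of_nat N))"
    by (rule exp_of_nat_mult[symmetric])
  also have "\<dots> = exp (of_nat (2 * j - 1) * (complex_of_real pi * \<i>))" using assms by (simp add: ac_simps)
  also have "\<dots> = exp (complex_of_real pi * \<i>) ^ (2 * j - 1)" by (rule exp_of_nat_mult)
  also have "\<dots> = -1" using assms by (simp add: exp_pi_i)
  finally show "(exp (complex_of_real pi * \<i> * of_nat (2 * j - 1) / of_nat N)) ^ N = -1" .
qed


lemma nat_ineq1: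
  fixes m n :: nat assumes "2 \<le> m" "m \<le> n" "m + n \<ge> 5"
  shows "9 * (m + n) \<le> m * 2^m * n^2"
proof (cases "m = 2")
  case True
  hence n3: "n \<ge> 3" using assms by simp
  have "9 * (m + n) \<le> 24 * n" using True n3 by simp
  also have "\<dots> \<le> 8 * n * n" using n3 by simp
  also have "\<dots> = m * 2^m * n^2" using True by (simp add: power2_eq_square)
  finally show ?thesis .
next
  case False
  hence m3: "m \<ge> 3" using assms by simp
  have "(8::nat) = 2^3" by simp
  also have "\<dots> \<le> 2^m" using m3 by (intro power_increasing) auto
  finally have p: "8 \<le> (2::nat)^m" .
  have "9 * (m + n) \<le> 18 * n" using assms by simp
  also have "\<dots> \<le> 2 * 8 * n * n" using assms by simp
  also have "\<dots> \<le> m * 2^m * n * n" using assms p by (intro mult_right_mono mult_mono) auto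
  finally show ?thesis by (simp add: power2_eq_square mult.assoc)
qed

lemma nat_ineq2:
  fixes m n :: nat assumes "2 \<le> n" "n < m"
  shows "18 * (m + n) \<le> m * 2^m * n^2"
proof (cases "m = 3")
  case True
  hence "n = 2" using assms by simp
  thus ?thesis using True by simp
next
  case False
  hence m4: "m \<ge> 4" using assms by simp
  have "(16::nat) = 2^4" by simp
  also have "\<dots> \<le> 2^m" using m4 by (intro power_increasing) auto
  finally have p: "16 \<le> (2::nat)^m" .
  have n4: "4 \<le> n * n" using assms mult_mono[of 2 n 2 n] by simp
  have "18 * (m + n) \<le> m * 16 * 4" using assms by simp
  also have "\<dots> \<le> m * 2^m * (n * n)" using p n4 by (intro mult_mono) auto
  finally show ?thesis by (simp add: power2_eq_square)
qed

theorem lemma4p3: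
  fixes m n :: nat and lam :: complex
  assumes "m \<ge> 2" and "n \<ge> 2"
    and "1 / real m + 1 / real n < 1"
    and "0 < cmod lam" and "cmod lam < 1 / (2 ^ m * real n ^ 2)"
  shows "\<exists>w :: nat \<Rightarrow> complex.
           (\<forall>j\<in>{1..m+n}. E_lam m n lam (w j) = 0
              \<and> cmod (w j - w_tilde m n lam j) < 2 * real (m + n) / real m)
         \<and> (\<forall>i\<in>{1..m+n}. \<forall>j\<in>{1..m+n}. w i = w j \<longleftrightarrow> i = j)"
proof -
  note m2 = assms(1) and n2 = assms(2)
  define N where "N = m + n"
  have N5: "m + n \<ge> 5"
  proof (rule ccontr)
    assume "\<not> m + n \<ge> 5"
    hence "m = 2" "n = 2" using m2 n2 by auto
    thus False using assms(3) by simp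
  qed
  have mpos: "real m > 0" and npos: "real n > 0" using m2 n2 by auto
  have N0: "N > 0" using N5 unfolding N_def by linarith
  define r where "r = r0 m n"
  have rpos: "r > 0" unfolding r_def r0_def using mpos npos by simp
  have rN: "r ^ N = real n / real m"
  proof -
    have "r ^ N = r powr real N" using powr_realpow[OF rpos] by simp
    also have "\<dots> = (real n / real m) powr (1 / real N * real N)"
      unfolding r_def r0_def N_def by (simp add: powr_powr)
    also have "\<dots> = real n / real m" using N0 mpos npos by simp
    finally show ?thesis .
  qed
  have rhalf: "r \<ge> 1/2"
  proof (rule ccontr)
    assume "\<not> r \<ge> 1/2"
    hence "r ^ N < (1/2) ^ N" using rpos N0 by (intro power_strict_mono) auto
    hence "real n / real m < 1 / 2 ^ N" using rN by (simp add: power_divide)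
    hence "real n * 2 ^ N < real m" using mpos by (simp add: field_simps)
    hence lt: "n * 2 ^ N < m" by (metis of_nat_less_iff of_nat_mult of_nat_numeral of_nat_power)
    have "m < 2 ^ m" by (rule less_exp)
    also have "\<dots> \<le> 2 ^ N" unfolding N_def by (intro power_increasing) auto
    also have "\<dots> \<le> n * 2 ^ N" using n2 by simp
    finally show False using lt by simp
  qed
  have key: "real m * r * 2^m * real n^2 \<ge> 9 * real N"
  proof (cases "m \<le> n")
    case True
    have r1: "r \<ge> 1" unfolding r_def r0_def using True mpos
      by (intro ge_one_powr_ge_zero) (auto simp: field_simps)
    have "9 * real N = real (9 * (m + n))" unfolding N_def by simp
    also have "\<dots> \<le> real (m * 2^m * n^2)" using nat_ineq1[OF m2 True N5] by linarith
    also have "\<dots> = real m * 1 * 2^m * real n^2" by simp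
    also have "\<dots> \<le> real m * r * 2^m * real n^2" using r1 mpos by (intro mult_right_mono mult_left_mono) auto
    finally show ?thesis .
  next
    case False
    have "9 * real N = real (18 * (m + n)) / 2" unfolding N_def by simp
    also have "\<dots> \<le> real (m * 2^m * n^2) / 2"     proof -
      have "18 * (m + n) \<le> m * 2^m * n^2" using nat_ineq2[OF n2] False by simp
      hence "real (18 * (m + n)) \<le> real (m * 2^m * n^2)" by (simp only: of_nat_le_iff)
      thus ?thesis by (intro divide_right_mono) auto
    qed
    also have "\<dots> = real m * (1/2) * 2^m * real n^2" by simp
    also have "\<dots> \<le> real m * r * 2^m * real n^2" using rhalf mpos by (intro mult_right_mono mult_left_mono) auto
    finally show ?thesis .
  qed
  define A where "A = r / cmod lam"
  have lampos: "cmod lam > 0" using assms(4) .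
  have lamne: "lam \<noteq> 0" using lampos by auto
  have Agt: "A \<ge> r * 2^m * real n^2"
  proof -
    have "cmod lam * (2^m * real n^2) < 1" using assms(5) npos by (simp add: field_simps)
    hence "r * (cmod lam * (2^m * real n^2)) \<le> r" using rpos by simp
    thus ?thesis unfolding A_def using lampos by (simp add: field_simps)
  qed
  have mA: "real m * A \<ge> 9 * real (m + n)"
  proof -
    have "real m * (r * 2^m * real n^2) \<le> real m * A" using Agt mpos by (intro mult_left_mono) auto
    moreover have "real m * (r * 2^m * real n^2) = real m * r * 2^m * real n^2" by (simp add: mult.assoc)
    ultimately show ?thesis using key unfolding N_def by linarith
  qed
  have An: "A \<ge> 2 * real n ^ 2"
  proof -
    have "(4::real) = 2^2" by simp
    also have "\<dots> \<le> 2^m" using m2 by (intro power_increasing) auto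
    finally have "(4::real) \<le> 2^m" .
    hence "1/2 * 4 * real n^2 \<le> r * 2^m * real n^2" using rhalf by (intro mult_right_mono mult_mono) auto
    thus ?thesis using Agt by simp
  qed
  define om where "om = (\<lambda>j::nat. exp (complex_of_real pi * \<i> * of_nat (2 * j - 1) / of_nat N))"
  have wt: "w_tilde m n lam j = complex_of_real r / lam * om j" for j
    unfolding w_tilde_def om_def r_def N_def by simp
  have ex: "\<exists>w. E_lam m n lam w = 0 \<and> cmod (w - w_tilde m n lam j) \<le> 5 / (2 * real m)"
    if j: "j \<in> {1..m+n}" for j
  proof (rule root_near[OF m2 n2 N5 _ mA An])
    have j1: "j \<ge> 1" using j by simp
    show "cmod (w_tilde m n lam j) = A"
      unfolding wt A_def using omega_facts(2)[OF N0 j1] rpos by (simp add: norm_mult norm_divide om_def)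
    have "lam ^ (m + n) * w_tilde m n lam j ^ (m + n) = (lam * w_tilde m n lam j) ^ N"
      unfolding N_def by (simp add: power_mult_distrib)
    also have "lam * w_tilde m n lam j = complex_of_real r * om j" unfolding wt using lamne by simp
    also have "(complex_of_real r * om j) ^ N = complex_of_real (r ^ N) * om j ^ N"
      by (simp add: power_mult_distrib)
    also have "\<dots> = - (of_nat n / of_nat m)" using omega_facts(3)[OF N0 j1] unfolding om_def rN by simp
    finally show "lam ^ (m + n) * w_tilde m n lam j ^ (m + n) = - (of_nat n / of_nat m)" .
  qed
  then obtain w where w: "\<forall>j\<in>{1..m+n}. E_lam m n lam (w j) = 0 \<and> cmod (w j - w_tilde m n lam j) \<le> 5 / (2 * real m)"
    by metis
  have sep: "cmod (w_tilde m n lam i - w_tilde m n lam j) > 5 / real m"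
    if i: "i \<in> {1..m+n}" and j: "j \<in> {1..m+n}" and ij: "i \<noteq> j" for i j
  proof -
    have i1: "i \<ge> 1" and j1: "j \<ge> 1" using i j by auto
    define ti where "ti = pi * (2 * real i - 1) / real N"
    define tj where "tj = pi * (2 * real j - 1) / real N"
    have oi: "om i = exp (\<i> * of_real ti)" unfolding om_def ti_def using omega_facts(1)[OF N0 i1] .
    have oj: "om j = exp (\<i> * of_real tj)" unfolding om_def tj_def using omega_facts(1)[OF N0 j1] .
    have "om i = om j * exp (\<i> * of_real (ti - tj))"
      unfolding oi oj by (simp add: exp_add[symmetric] algebra_simps)
    hence eq: "om i - om j = om j * (exp (\<i> * of_real (ti - tj)) - 1)" by (simp add: algebra_simps)
    have oj1: "cmod (om j) = 1" using omega_facts(2)[OF N0 j1] unfolding om_def .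
    have "cmod (om i - om j) = cmod (om j) * cmod (exp (\<i> * of_real (ti - tj)) - 1)"
      unfolding eq norm_mult ..
    also have "\<dots> = 2 * \<bar>sin ((ti - tj) / 2)\<bar>" unfolding oj1 dist_exp_i_1 by simp
    also have "(ti - tj) / 2 = pi * (real i - real j) / real N"
      unfolding ti_def tj_def using N0 by (simp add: field_simps)
    finally have c: "cmod (om i - om j) \<ge> 2 / real N"
      using sin_sep[of i N j] i j ij unfolding N_def by auto
    have "w_tilde m n lam i - w_tilde m n lam j = complex_of_real r / lam * (om i - om j)"
      unfolding wt by (simp add: algebra_simps)
    hence "cmod (w_tilde m n lam i - w_tilde m n lam j) = A * cmod (om i - om j)"
      unfolding A_def using rpos by (simp add: norm_mult norm_divide)
    also have "\<dots> \<ge> A * (2 / real N)" using c An by (intro mult_left_mono) (auto intro: order_trans[OF _ An])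
    finally have "cmod (w_tilde m n lam i - w_tilde m n lam j) \<ge> A * (2 / real N)" .
    moreover have "A * (2 / real N) \<ge> 18 / real m"
    proof -
      have "A \<ge> 9 * real N / real m" using mA mpos unfolding N_def by (simp add: field_simps)
      hence "A * (2 / real N) \<ge> 9 * real N / real m * (2 / real N)" using N0 by (intro mult_right_mono) auto
      thus ?thesis using N0 by simp
    qed
    moreover have "18 / real m > 5 / real m" using mpos by (simp add: divide_strict_right_mono)
    ultimately show ?thesis by linarith
  qed
  show ?thesis
  proof (intro exI[of _ w] conjI ballI)
    fix j assume j: "j \<in> {1..m+n}"
    show "E_lam m n lam (w j) = 0" using w j by blast
    have "cmod (w j - w_tilde m n lam j) \<le> 5 / (2 * real m)" using w j by blast
    also have "\<dots> < 2 * real (m + n) / real m" using mpos N5 by (simp add: divide_strict_right_mono field_simps)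
    finally show "cmod (w j - w_tilde m n lam j) < 2 * real (m + n) / real m" .
  next
    fix i j assume i: "i \<in> {1..m+n}" and j: "j \<in> {1..m+n}"
    show "w i = w j \<longleftrightarrow> i = j"
    proof
      assume eq: "w i = w j"
      show "i = j"
      proof (rule ccontr)
        assume ij: "i \<noteq> j"
        have "cmod (w_tilde m n lam i - w_tilde m n lam j) \<le> cmod (w i - w_tilde m n lam i) + cmod (w j - w_tilde m n lam j)"
          using norm_triangle_ineq4[of "w j - w_tilde m n lam j" "w i - w_tilde m n lam i"] eq
          by (simp add: norm_minus_commute)
        also have "\<dots> \<le> 5 / (2 * real m) + 5 / (2 * real m)" using w i j by (intro add_mono) auto
        also have "\<dots> = 5 / real m" by simp
        finally show False using sep[OF i j ij] by simp
      qed
    qed simp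
  qed
qed

end
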